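(* Let $a>0$, $\alpha\in[0,1)$ and $f\in\mathcal C_a$, and let $g=\mathrm{Sh}_\alpha(f)$. Then $\|g-g^{\pm\eta}\|_{\infty,\mathbb R}\to0$ as $\eta\to0$ (for both signs).
   Context: $\mathcal C_a$ is the set of $C^1$ functions $f:\mathbb R\to\mathbb R$ that are even, satisfy $f(s)=|s|$ for $|s|\ge a$ and are strictly convex on $[-a,a]$. For any function $g$ and $\eta\in(0,1)$, $g^{\pm\eta}(s)=(1\pm\frac\eta2)g\big(s/(1\pm\frac\eta2)\big)$. For $f\in\mathcal C_a$: $F_\alpha(s)=f(s)-\alpha s$, $x_\alpha^+=(f')^{-1}(\alpha)\in[0,a)$ (inverse of $f':[-a,a]\to[-1,1]$); let $F_\alpha^{-1}$ be the inverse of $F_\alpha|_{[x_\alpha^+,\infty)}$, $\phi=F_\alpha^{-1}\circ F_\alpha$, $\delta_x=(1-\alpha)^{-1}F_\alpha(x)-\phi(x)$, $s_\alpha=x_\alpha^++\delta_{x_\alpha^+}$; $x\mapsto x+\delta_x$ is an increasing bijection $(-\infty,x_\alpha^+]\to(-\infty,s_\alpha]$ with inverse $\tau$. Define $\mathrm{Sh}_\alpha(f)(x)=\alpha x+F_\alpha(\tau(x))$ for $x\le s_\alpha$ and $=x$ for $x>s_\alpha$. *)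

theory Defs
  imports "HOL-Analysis.Analysis"
begin

definition strictly_convex_on :: "real set \<Rightarrow> (real \<Rightarrow> real) \<Rightarrow> bool" where
  "strictly_convex_on S f \<longleftrightarrow>
     (\<forall>x\<in>S. \<forall>y\<in>S. x \<noteq> y \<longrightarrow> (\<forall>t::real. 0 < t \<and> t < 1 \<longrightarrow>
        f ((1 - t) * x + t * y) < (1 - t) * f x + t * f y))"

definition class_C :: "real \<Rightarrow> (real \<Rightarrow> real) set" where
  "class_C a = {f. f C1_differentiable_on UNIV \<and> (\<forall>s. f (-s) = f s)
      \<and> (\<forall>s. a \<le> \<bar>s\<bar> \<longrightarrow> f s = \<bar>s\<bar>) \<and> strictly_convex_on {-a..a} f}"

text \<open>g^{\<pm>\<eta>}: rescaling with factor c = 1 \<pm> \<eta>/2.\<close>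
definition rescale :: "real \<Rightarrow> (real \<Rightarrow> real) \<Rightarrow> real \<Rightarrow> real" where
  "rescale c g s = c * g (s / c)"

definition Falpha :: "(real \<Rightarrow> real) \<Rightarrow> real \<Rightarrow> real \<Rightarrow> real" where
  "Falpha f \<alpha> s = f s - \<alpha> * s"

definition xplus :: "real \<Rightarrow> (real \<Rightarrow> real) \<Rightarrow> real \<Rightarrow> real" where
  "xplus a f \<alpha> = (THE x. x \<in> {-a..a} \<and> deriv f x = \<alpha>)"

definition Finv :: "real \<Rightarrow> (real \<Rightarrow> real) \<Rightarrow> real \<Rightarrow> real \<Rightarrow> real" where
  "Finv a f \<alpha> y = (THE z. xplus a f \<alpha> \<le> z \<and> Falpha f \<alpha> z = y)"

definition phi :: "real \<Rightarrow> (real \<Rightarrow> real) \<Rightarrow> real \<Rightarrow> real \<Rightarrow> real" where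
  "phi a f \<alpha> x = Finv a f \<alpha> (Falpha f \<alpha> x)"

definition delta :: "real \<Rightarrow> (real \<Rightarrow> real) \<Rightarrow> real \<Rightarrow> real \<Rightarrow> real" where
  "delta a f \<alpha> x = Falpha f \<alpha> x / (1 - \<alpha>) - phi a f \<alpha> x"

definition salpha :: "real \<Rightarrow> (real \<Rightarrow> real) \<Rightarrow> real \<Rightarrow> real" where
  "salpha a f \<alpha> = xplus a f \<alpha> + delta a f \<alpha> (xplus a f \<alpha>)"

definition tau :: "real \<Rightarrow> (real \<Rightarrow> real) \<Rightarrow> real \<Rightarrow> real \<Rightarrow> real" where
  "tau a f \<alpha> y = (THE x. x \<le> xplus a f \<alpha> \<and> x + delta a f \<alpha> x = y)"

definition Sh :: "real \<Rightarrow> real \<Rightarrow> (real \<Rightarrow> real) \<Rightarrow> real \<Rightarrow> real" where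
  "Sh a \<alpha> f x = (if x \<le> salpha a f \<alpha> then \<alpha> * x + Falpha f \<alpha> (tau a f \<alpha> x) else x)"

text \<open>Sup norm over R (extended real valued, so it is meaningful even if unbounded).\<close>
definition supnorm :: "(real \<Rightarrow> real) \<Rightarrow> ereal" where
  "supnorm h = (SUP x. ereal \<bar>h x\<bar>)"

end

theory Submission
  imports Defs
begin


locale shc =
  fixes a \<alpha> :: real and f :: "real \<Rightarrow> real"
  assumes apos: "a > 0" and al0: "0 \<le> \<alpha>" and al1: "\<alpha> < 1" and fC: "f \<in> class_C a"
begin

definition f' where "f' = deriv f"

lemma fC1: "f C1_differentiable_on UNIV" and feven: "f (-s) = f s"
  and fabs: "a \<le> \<bar>s\<bar> \<Longrightarrow> f s = \<bar>s\<bar>" and fsc: "strictly_convex_on {-a..a} f"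
  using fC by (auto simp: class_C_def)

lemma fder: "(f has_real_derivative f' x) (at x)" and f'cont: "continuous_on UNIV f'"
proof -
  obtain D where D: "\<And>x. (f has_vector_derivative D x) (at x)" "continuous_on UNIV D"
    using fC1 unfolding C1_differentiable_on_def by blast
  have DD: "(f has_real_derivative D x) (at x)" for x
    using D(1)[of x] by (simp add: has_real_derivative_iff_has_vector_derivative)
  have "f' = D" unfolding f'_def using DD by (auto intro!: DERIV_imp_deriv)
  then show "(f has_real_derivative f' x) (at x)" "continuous_on UNIV f'" using DD D(2) by auto
qed

lemma fcont: "continuous_on S f"
  using fder by (meson DERIV_continuous continuous_at_imp_continuous_on)

lemma f'_gt: "x > a \<Longrightarrow> f' x = 1"
proof -
  assume x: "x > a"
  have "((\<lambda>s. s) has_real_derivative 1) (at x)" by (rule DERIV_ident)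
  then have "(f has_real_derivative 1) (at x)"
    by (rule has_field_derivative_transform_within_open[where S="{a<..}"]) (use x apos fabs in auto)
  then show ?thesis using fder DERIV_unique by blast
qed

lemma f'_lt: "x < -a \<Longrightarrow> f' x = -1"
proof -
  assume x: "x < -a"
  have "((\<lambda>s. -s) has_real_derivative -1) (at x)" by (auto intro!: derivative_eq_intros)
  then have "(f has_real_derivative -1) (at x)"
    by (rule has_field_derivative_transform_within_open[where S="{..< -a}"]) (use x apos fabs in auto)
  then show ?thesis using fder DERIV_unique by blast
qed

lemma f'_a: "f' a = 1"
proof -
  have "(f' \<longlongrightarrow> f' a) (at_right a)"
    using f'cont by (meson UNIV_I continuous_on_def filterlim_at_split tendsto_within_subset top_greatest)
  moreover have "eventually (\<lambda>x. f' x = 1) (at_right a)"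
    using eventually_at_right_less[of a] by eventually_elim (simp add: f'_gt)
  then have "(f' \<longlongrightarrow> 1) (at_right a)" by (rule tendsto_eventually)
  ultimately show ?thesis using tendsto_unique by (metis trivial_limit_at_right_real)
qed

lemma f'_ma: "f' (-a) = -1"
proof -
  have "(f' \<longlongrightarrow> f' (-a)) (at_left (-a))"
    using f'cont by (meson UNIV_I continuous_on_def filterlim_at_split tendsto_within_subset top_greatest)
  moreover have "eventually (\<lambda>x. f' x = -1) (at_left (-a))"
    by (rule eventually_mono[OF eventually_at_left_real[of "-a-1" "-a"]]) (auto simp: f'_lt)
  then have "(f' \<longlongrightarrow> -1) (at_left (-a))" by (rule tendsto_eventually)
  ultimately show ?thesis using tendsto_unique by (metis trivial_limit_at_left_real)
qed

lemma fconv: "convex_on {-a..a} f"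
proof (rule convex_onI)
  fix t x y :: real assume "0 < t" "t < 1" "x \<in> {-a..a}" "y \<in> {-a..a}"
  then show "f ((1 - t) *\<^sub>R x + t *\<^sub>R y) \<le> (1 - t) * f x + t * f y"
  proof (cases "x = y")
    case False
    then have "f ((1 - t) * x + t * y) < (1 - t) * f x + t * f y"
      using fsc \<open>0 < t\<close> \<open>t < 1\<close> \<open>x \<in> {-a..a}\<close> \<open>y \<in> {-a..a}\<close>
      unfolding strictly_convex_on_def by blast
    then show ?thesis by simp
  qed (simp add: algebra_simps)
qed simp

lemma tangent: "x \<in> {-a<..<a} \<Longrightarrow> y \<in> {-a..a} \<Longrightarrow> f y - f x \<ge> f' x * (y - x)"
  by (rule convex_on_imp_above_tangent[OF fconv])
     (auto intro: has_field_derivative_at_within[OF fder])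

lemma f'_strict: assumes "x \<in> {-a<..<a}" "y \<in> {-a<..<a}" "x < y" shows "f' x < f' y"
proof (rule ccontr)
  assume "\<not> f' x < f' y"
  have t1: "f y - f x \<ge> f' x * (y - x)" using tangent assms by auto
  have t2: "f x - f y \<ge> f' y * (x - y)" using tangent assms by auto
  have "f' x * (y - x) \<le> f' y * (y - x)" using t1 t2 by (simp add: algebra_simps)
  then have "f' x \<le> f' y" using assms by simp
  then have e: "f' x = f' y" using \<open>\<not> f' x < f' y\<close> by simp
  define z where "z = (1 - 1/2) * x + (1/2) * y"
  have "f z < (1 - 1/2) * f x + (1/2) * f y"
  proof -
    have "x \<in> {-a..a}" "y \<in> {-a..a}" "x \<noteq> y" using assms by auto
    then show ?thesis using fsc unfolding strictly_convex_on_def z_def by (smt (verit, best) field_sum_of_halves)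
  qed
  moreover have "z \<in> {-a..a}" using assms by (auto simp: z_def)
  then have "f z - f x \<ge> f' x * (z - x)" using tangent assms by auto
  ultimately show False using t1 t2 e by (auto simp: z_def algebra_simps)
qed

lemma f'_le1: assumes "x \<in> {-a<..<a}" shows "f' x \<le> 1"
proof -
  have "(f' \<longlongrightarrow> f' a) (at_left a)"
    using f'cont by (meson UNIV_I continuous_on_def filterlim_at_split tendsto_within_subset top_greatest)
  moreover have "eventually (\<lambda>y. f' x \<le> f' y) (at_left a)"
    by (rule eventually_mono[OF eventually_at_left_real[of x a]]) (use assms f'_strict in \<open>auto intro: less_imp_le\<close>)
  ultimately show ?thesis using f'_a tendsto_lowerbound by (metis trivial_limit_at_left_real)
qed

lemma f'_gem1: assumes "x \<in> {-a<..<a}" shows "f' x \<ge> -1"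
proof -
  have "(f' \<longlongrightarrow> f' (-a)) (at_right (-a))"
    using f'cont by (meson UNIV_I continuous_on_def filterlim_at_split tendsto_within_subset top_greatest)
  moreover have "eventually (\<lambda>y. f' y \<le> f' x) (at_right (-a))"
    by (rule eventually_mono[OF eventually_at_right_real[of "-a" x]]) (use assms f'_strict in \<open>auto intro: less_imp_le\<close>)
  ultimately show ?thesis using f'_ma tendsto_upperbound by (metis trivial_limit_at_right_real)
qed

lemma f'_bound: "\<bar>f' x\<bar> \<le> 1"
  using f'_le1[of x] f'_gem1[of x] f'_gt[of x] f'_lt[of x] f'_a f'_ma
  by (cases "x < -a"; cases "x > a"; cases "x = a"; cases "x = -a") auto

end


context shc begin

abbreviation "F \<equiv> Falpha f \<alpha>"
abbreviation "xp \<equiv> xplus a f \<alpha>"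

lemma xp_props: "xp \<in> {-a<..<a}" "f' xp = \<alpha>"
proof -
  have "f' (-a) \<le> \<alpha>" "\<alpha> \<le> f' a" "-a \<le> a" using f'_a f'_ma al0 al1 apos by auto
  moreover have "continuous_on {-a..a} f'" using f'cont continuous_on_subset by blast
  ultimately obtain x where x: "-a \<le> x" "x \<le> a" "f' x = \<alpha>" using IVT'[of f' "-a" \<alpha> a] by blast
  have xi: "x \<in> {-a<..<a}" using x f'_a f'_ma al0 al1 by (cases "x = a"; cases "x = -a") auto
  have "xp = x" unfolding xplus_def f'_def[symmetric]
  proof (rule the_equality)
    show "x \<in> {-a..a} \<and> f' x = \<alpha>" using x by auto
  next
    fix y assume y: "y \<in> {-a..a} \<and> f' y = \<alpha>"
    then have yi: "y \<in> {-a<..<a}" using f'_a f'_ma al0 al1 by (cases "y = a"; cases "y = -a") auto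
    show "y = x" using f'_strict[OF xi yi] f'_strict[OF yi xi] x y by (cases "x < y"; cases "y < x") auto
  qed
  then show "xp \<in> {-a<..<a}" "f' xp = \<alpha>" using xi x by auto
qed

lemma f'_le_al: "x \<le> xp \<Longrightarrow> f' x \<le> \<alpha>"
  using xp_props f'_lt[of x] f'_ma f'_strict[of x xp] al0
  by (cases "x < -a"; cases "x = -a"; cases "x = xp") (auto simp: less_imp_le)

lemma f'_gt_al: "x > xp \<Longrightarrow> f' x > \<alpha>"
  using xp_props f'_gt[of x] f'_a f'_strict[of xp x] al1
  by (cases "x > a"; cases "x = a") auto

lemma Fder: "(F has_real_derivative f' x - \<alpha>) (at x)"
  unfolding Falpha_def by (auto intro!: derivative_eq_intros fder)

lemma Fcont: "continuous_on S F"
  unfolding Falpha_def by (auto intro!: continuous_intros fcont)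

lemma F_noninc: "x \<le> y \<Longrightarrow> y \<le> xp \<Longrightarrow> F y \<le> F x"
  by (rule DERIV_nonpos_imp_nonincreasing) (use Fder f'_le_al in force)+

lemma F_inc: "xp \<le> x \<Longrightarrow> x < y \<Longrightarrow> F x < F y"
  by (rule DERIV_pos_imp_increasing_open) (use Fder f'_gt_al Fcont in force)+

lemma F_min: "F xp \<le> F x"
  using F_noninc[of x xp] F_inc[of xp x] by (cases "x \<le> xp") auto

lemma F_big: "a \<le> s \<Longrightarrow> F s = (1 - \<alpha>) * s"
  using fabs[of s] apos by (simp add: Falpha_def algebra_simps)

lemma F_neg: "s \<le> -a \<Longrightarrow> F s = - (1 + \<alpha>) * s"
  using fabs[of s] apos by (simp add: Falpha_def algebra_simps)

lemma f'_le: "f' x \<le> 1" using f'_bound[of x] by auto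

lemma f_lip: "u \<le> v \<Longrightarrow> f v - f u \<le> v - u"
proof -
  assume uv: "u \<le> v"
  have "(\<lambda>s. f s - s) v \<le> (\<lambda>s. f s - s) u"
    by (rule DERIV_nonpos_imp_nonincreasing[OF uv])
       (use f'_le in \<open>auto intro!: exI derivative_eq_intros fder\<close>)
  then show ?thesis by simp
qed

lemma Finv_eq: "xp \<le> z \<Longrightarrow> F z = y \<Longrightarrow> Finv a f \<alpha> y = z"
  unfolding Finv_def
proof (rule the_equality)
  fix w assume "xp \<le> z" "F z = y" "xp \<le> w \<and> F w = y"
  then show "w = z" using F_inc[of z w] F_inc[of w z] by (cases "z < w"; cases "w < z") auto
qed auto

lemma Finv_props: assumes "F xp \<le> y" shows "xp \<le> Finv a f \<alpha> y" "F (Finv a f \<alpha> y) = y"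
proof -
  define R where "R = max a (y / (1 - \<alpha>))"
  have "F R = (1 - \<alpha>) * R" using F_big R_def by auto
  moreover have "(1 - \<alpha>) * (y / (1 - \<alpha>)) = y" using al1 by simp
  then have "y \<le> (1 - \<alpha>) * R" unfolding R_def using al1
    by (metis max.cobounded2 mult_left_mono diff_ge_0_iff_ge less_imp_le)
  moreover have "xp \<le> R" using xp_props R_def by auto
  ultimately obtain z where "xp \<le> z" "z \<le> R" "F z = y"
    using IVT'[of F xp y R] Fcont assms by auto
  then show "xp \<le> Finv a f \<alpha> y" "F (Finv a f \<alpha> y) = y" using Finv_eq by auto
qed

lemma phi_props: "xp \<le> phi a f \<alpha> x" "F (phi a f \<alpha> x) = F x"
  unfolding phi_def using Finv_props F_min by auto

lemma phi_mono: "x \<le> y \<Longrightarrow> y \<le> xp \<Longrightarrow> phi a f \<alpha> y \<le> phi a f \<alpha> x"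
  using phi_props[of x] phi_props[of y] F_noninc[of x y] F_inc[of "phi a f \<alpha> x" "phi a f \<alpha> y"]
  by force

lemma phi_neg: "x \<le> -a \<Longrightarrow> phi a f \<alpha> x = F x / (1 - \<alpha>)"
proof -
  assume x: "x \<le> -a"
  have "F x = (1 + \<alpha>) * (-x)" using F_neg[OF x] by (simp add: algebra_simps)
  moreover have "(1 + \<alpha>) * (-x) \<ge> (1 - \<alpha>) * a" using x al0 al1 apos
    by (intro mult_mono) auto
  ultimately have ge: "F x / (1 - \<alpha>) \<ge> a" using al1 by (subst pos_le_divide_eq) (auto simp: mult.commute)
  have "F (F x / (1 - \<alpha>)) = F x" using F_big[OF ge] al1 by simp
  moreover have "xp \<le> F x / (1 - \<alpha>)" using ge xp_props by auto
  ultimately show ?thesis unfolding phi_def by (intro Finv_eq) auto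
qed

lemma phi_xp: "phi a f \<alpha> xp = xp"
  unfolding phi_def by (rule Finv_eq) auto

definition h where "h x = x + delta a f \<alpha> x"

lemma h_expand: assumes "x \<le> y" "y \<le> xp" shows "h y - h x \<ge> y - x"
proof -
  let ?u = "phi a f \<alpha> y" and ?v = "phi a f \<alpha> x"
  have uv: "?u \<le> ?v" using phi_mono assms by auto
  have "F ?v - F ?u = F x - F y" using phi_props by simp
  moreover have "f ?v - f ?u \<le> ?v - ?u" using f_lip uv by auto
  ultimately have "F x - F y \<le> (1 - \<alpha>) * (?v - ?u)" by (simp add: Falpha_def algebra_simps)
  then have "(F x - F y) / (1 - \<alpha>) \<le> ?v - ?u" using al1 by (simp add: pos_divide_le_eq mult.commute)
  then show ?thesis unfolding h_def delta_def by (simp add: diff_divide_distrib algebra_simps)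
qed

lemma h_neg: "x \<le> -a \<Longrightarrow> h x = x"
  unfolding h_def delta_def using phi_neg by simp

lemma salpha_eq: "salpha a f \<alpha> = h xp"
  unfolding salpha_def h_def ..

lemma salpha_eq2: "salpha a f \<alpha> = F xp / (1 - \<alpha>)"
  unfolding salpha_def delta_def phi_xp by simp

lemma phi_cont: "continuous_on {-a..xp} (phi a f \<alpha>)"
proof -
  define B where "B = phi a f \<alpha> (-a)"
  have c1: "continuous_on (F ` {xp..B}) (Finv a f \<alpha>)"
    by (rule continuous_on_inv[OF Fcont compact_Icc]) (auto intro: Finv_eq)
  have sub: "F ` {-a..xp} \<subseteq> F ` {xp..B}"
  proof
    fix y assume "y \<in> F ` {-a..xp}"
    then obtain x where x: "x \<in> {-a..xp}" "y = F x" by auto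
    then have "phi a f \<alpha> x \<in> {xp..B}" using phi_props phi_mono B_def by auto
    then show "y \<in> F ` {xp..B}" using phi_props x by (metis image_eqI)
  qed
  show ?thesis unfolding phi_def
    by (rule continuous_on_compose2[OF c1 Fcont sub]) 
qed

lemma h_cont: "continuous_on {-a..xp} h"
  unfolding h_def delta_def by (intro continuous_intros Fcont phi_cont) (use al1 in auto)

definition s where "s = salpha a f \<alpha>"

lemma s_ge: "-a \<le> s"
  using h_expand[of "-a" xp] h_neg[of "-a"] xp_props salpha_eq s_def by auto

lemma tau_eq: "x \<le> xp \<Longrightarrow> h x = y \<Longrightarrow> tau a f \<alpha> y = x"
  unfolding tau_def h_def[symmetric]
proof (rule the_equality)
  fix z assume "x \<le> xp" "h x = y" "z \<le> xp \<and> h z = y"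
  then show "z = x" using h_expand[of x z] h_expand[of z x] by (cases "x \<le> z") auto
qed auto

lemma tau_props: assumes "y \<le> s" shows "tau a f \<alpha> y \<le> xp" "h (tau a f \<alpha> y) = y"
proof -
  have "\<exists>x. x \<le> xp \<and> h x = y"
  proof (cases "y \<le> -a")
    case True then show ?thesis using h_neg xp_props by (intro exI[of _ y]) auto
  next
    case False
    then have "h (-a) \<le> y" "y \<le> h xp" using h_neg assms s_def salpha_eq by auto
    then obtain x where "-a \<le> x" "x \<le> xp" "h x = y" using IVT'[OF _ _ _ h_cont] xp_props by force
    then show ?thesis by auto
  qed
  then obtain x where "x \<le> xp" "h x = y" by auto
  then show "tau a f \<alpha> y \<le> xp" "h (tau a f \<alpha> y) = y" using tau_eq by auto
qed

lemma tau_lip: assumes "y1 \<le> s" "y2 \<le> s" shows "\<bar>tau a f \<alpha> y1 - tau a f \<alpha> y2\<bar> \<le> \<bar>y1 - y2\<bar>"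
  using tau_props[OF assms(1)] tau_props[OF assms(2)]
    h_expand[of "tau a f \<alpha> y1" "tau a f \<alpha> y2"] h_expand[of "tau a f \<alpha> y2" "tau a f \<alpha> y1"]
  by (cases "tau a f \<alpha> y1 \<le> tau a f \<alpha> y2") auto

lemma tau_cont: "continuous_on {..s} (tau a f \<alpha>)"
proof -
  have "lipschitz_on 1 {..s} (tau a f \<alpha>)"
    unfolding lipschitz_on_def dist_real_def using tau_lip by auto
  then show ?thesis by (rule lipschitz_on_continuous_on)
qed

abbreviation "gg \<equiv> Sh a \<alpha> f"

lemma g_s: "gg s = s"
proof -
  have t: "tau a f \<alpha> s = xp" using tau_eq[of xp s] salpha_eq s_def by auto
  have "gg s = \<alpha> * s + F xp" unfolding Sh_def s_def[symmetric] using t by simp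
  also have "\<dots> = s" unfolding s_def salpha_eq2 using al1 by (simp add: field_simps)
  finally show ?thesis .
qed

lemma g_cont: "continuous_on UNIV gg"
proof -
  have c1: "continuous_on {..s} gg"
  proof (rule continuous_on_eq)
    show "continuous_on {..s} (\<lambda>x. \<alpha> * x + F (tau a f \<alpha> x))"
      by (intro continuous_intros continuous_on_compose2[OF Fcont tau_cont]) auto
  qed (auto simp: Sh_def s_def)
  have c2: "continuous_on {s..} gg"
  proof (rule continuous_on_eq)
    show "continuous_on {s..} (\<lambda>x. x)" by (intro continuous_intros)
  next
    fix x assume "x \<in> {s..}" then show "x = gg x"
      using g_s by (cases "x = s") (auto simp: Sh_def s_def)
  qed
  have "continuous_on ({..s} \<union> {s..}) gg" by (rule continuous_on_closed_Un[OF _ _ c1 c2]) auto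
  moreover have "{..s} \<union> {s..} = UNIV" by auto
  ultimately show ?thesis by simp
qed

lemma g_abs: "\<bar>x\<bar> \<ge> max a (\<bar>s\<bar> + 1) \<Longrightarrow> gg x = \<bar>x\<bar>"
proof -
  assume x: "\<bar>x\<bar> \<ge> max a (\<bar>s\<bar> + 1)"
  show ?thesis
  proof (cases "x \<le> 0")
    case True
    then have x1: "x \<le> -a" using x by auto
    then have "x \<le> s" using s_ge by auto
    moreover have "tau a f \<alpha> x = x" using tau_eq[of x x] h_neg[OF x1] xp_props x1 by auto
    ultimately show ?thesis using fabs[of x] x1 apos
      by (simp add: Sh_def s_def[symmetric] Falpha_def)
  next
    case False
    then have "x > s" using x by auto
    then show ?thesis using False by (simp add: Sh_def s_def[symmetric])
  qed
qed

end


lemma rescale_unif: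
  fixes g :: "real \<Rightarrow> real" and M \<epsilon> :: real
  assumes cont: "continuous_on UNIV g" and M: "M > 0" and ab: "\<And>x. \<bar>x\<bar> \<ge> M \<Longrightarrow> g x = \<bar>x\<bar>"
    and e: "\<epsilon> > 0"
  shows "\<exists>d>0. \<forall>c. \<bar>c - 1\<bar> < d \<longrightarrow> (\<forall>x. \<bar>g x - rescale c g x\<bar> \<le> \<epsilon>)"
proof -
  define K where "K = 4 * M"
  have uc: "uniformly_continuous_on {-K..K} g"
    using compact_uniformly_continuous[OF continuous_on_subset[OF cont] compact_Icc] by auto
  obtain d1 where d1: "d1 > 0" "\<And>x y. x \<in> {-K..K} \<Longrightarrow> y \<in> {-K..K} \<Longrightarrow> dist y x < d1 \<Longrightarrow> dist (g y) (g x) < \<epsilon>/2"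
    using uc e unfolding uniformly_continuous_on_def by (meson half_gt_zero)
  have "bounded (g ` {-K..K})"
    using compact_continuous_image[OF continuous_on_subset[OF cont] compact_Icc] compact_imp_bounded by auto
  then obtain B where B: "B > 0" "\<And>y. y \<in> {-K..K} \<Longrightarrow> \<bar>g y\<bar> \<le> B"
    unfolding bounded_pos by auto
  define d where "d = min (1/2) (min (d1 / (8 * M)) (\<epsilon> / (2 * B)))"
  have dpos: "d > 0" using d1 M e B by (auto simp: d_def)
  show ?thesis
  proof (intro exI[of _ d] conjI allI impI dpos)
    fix c x :: real assume c: "\<bar>c - 1\<bar> < d"
    have "\<bar>c - 1\<bar> < 1/2" using c d_def by auto
    then have c1: "c > 1/2" "c < 3/2" by linarith+
    have cpos: "c > 0" using c1 by auto
    show "\<bar>g x - rescale c g x\<bar> \<le> \<epsilon>"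
    proof (cases "\<bar>x\<bar> \<ge> 2 * M")
      case True
      have "\<bar>x / c\<bar> = \<bar>x\<bar> / c" using cpos by simp
      moreover have "\<bar>x\<bar> / c \<ge> M"
      proof -
        have "M * c \<le> M * (3/2)" using c1 M by auto
        also have "\<dots> \<le> \<bar>x\<bar>" using True M by auto
        finally show ?thesis using cpos by (simp add: pos_le_divide_eq)
      qed
      ultimately have "g (x / c) = \<bar>x\<bar> / c" using ab[of "x / c"] cpos by simp
      then have "rescale c g x = \<bar>x\<bar>" unfolding rescale_def using cpos by simp
      moreover have "g x = \<bar>x\<bar>" using ab True M by simp
      ultimately show ?thesis using e by simp
    next
      case False
      have xK: "x \<in> {-K..K}" using False M K_def by auto
      have "\<bar>x / c\<bar> = \<bar>x\<bar> / c" using cpos by simp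
      also have "\<dots> \<le> \<bar>x\<bar> / (1/2)" using c1 by (intro divide_left_mono) auto
      finally have "\<bar>x / c\<bar> \<le> K" using False K_def by auto
      then have xcK: "x / c \<in> {-K..K}" unfolding atLeastAtMost_iff by linarith
      have "\<bar>x - x / c\<bar> = \<bar>x\<bar> * \<bar>c - 1\<bar> / c" using cpos
        by (simp add: field_simps abs_mult[symmetric] abs_divide) 
      also have "\<dots> \<le> \<bar>x\<bar> * \<bar>c - 1\<bar> / (1/2)" using c1 by (intro divide_left_mono) auto
      also have "\<dots> \<le> (2 * M) * d * 2"
      proof -
        have "\<bar>x\<bar> * \<bar>c - 1\<bar> \<le> (2 * M) * d" using False c by (intro mult_mono) auto
        then show ?thesis by simp
      qed
      also have "\<dots> \<le> d1 / 2"
      proof -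
        have "d \<le> d1 / (8 * M)" by (simp add: d_def)
        then have "(8 * M) * d \<le> d1" using M by (simp add: le_divide_eq mult.commute)
        then show ?thesis by simp
      qed
      also have "\<dots> < d1" using d1 by simp
      finally have "\<bar>x - x / c\<bar> < d1" .
      then have "\<bar>g x - g (x / c)\<bar> < \<epsilon>/2"
        using d1(2)[OF xK xcK] d1(1) by (cases "x = x / c") (auto simp: dist_real_def abs_minus_commute)
      moreover have "\<bar>g (x / c) - c * g (x / c)\<bar> \<le> \<epsilon>/2"
      proof -
        have "\<bar>g (x / c) - c * g (x / c)\<bar> = \<bar>c - 1\<bar> * \<bar>g (x / c)\<bar>"
          by (simp add: abs_mult[symmetric] algebra_simps)
        also have "\<dots> \<le> (\<epsilon> / (2 * B)) * B"
          using c B(2)[OF xcK] B(1) unfolding d_def by (intro mult_mono) auto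
        also have "\<dots> = \<epsilon>/2" using B(1) by simp
        finally show ?thesis .
      qed
      ultimately show ?thesis unfolding rescale_def by linarith
    qed
  qed
qed



lemma lim_generic:
  fixes g :: "real \<Rightarrow> real" and M :: real and c :: "real \<Rightarrow> real"
  assumes cont: "continuous_on UNIV g" and M: "M > 0" and ab: "\<And>x. \<bar>x\<bar> \<ge> M \<Longrightarrow> g x = \<bar>x\<bar>"
    and c: "(c \<longlongrightarrow> 1) F"
  shows "((\<lambda>\<eta>. supnorm (\<lambda>x. g x - rescale (c \<eta>) g x)) \<longlongrightarrow> 0) F"
proof (rule order_tendstoI)
  fix y :: ereal assume y: "y < 0"
  show "eventually (\<lambda>\<eta>. y < supnorm (\<lambda>x. g x - rescale (c \<eta>) g x)) F"
  proof (rule always_eventually, intro allI)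
    fix \<eta>
    have "ereal 0 \<le> ereal \<bar>g 0 - rescale (c \<eta>) g 0\<bar>" by simp
    also have "\<dots> \<le> supnorm (\<lambda>x. g x - rescale (c \<eta>) g x)"
      unfolding supnorm_def by (rule SUP_upper) simp
    finally show "y < supnorm (\<lambda>x. g x - rescale (c \<eta>) g x)" using y by (simp add: zero_ereal_def)
  qed
next
  fix y :: ereal assume y: "0 < y"
  obtain z where z: "0 < ereal z" "ereal z < y" using ereal_dense2[OF y] by auto
  then have zpos: "z > 0" by simp
  obtain d where d: "d > 0" "\<And>c. \<bar>c - 1\<bar> < d \<Longrightarrow> \<forall>x. \<bar>g x - rescale c g x\<bar> \<le> z"
    using rescale_unif[OF cont M ab zpos] by blast
  have "eventually (\<lambda>\<eta>. dist (c \<eta>) 1 < d) F" using c d(1) tendsto_iff by blast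
  then show "eventually (\<lambda>\<eta>. supnorm (\<lambda>x. g x - rescale (c \<eta>) g x) < y) F"
  proof eventually_elim
    fix \<eta> assume "dist (c \<eta>) 1 < d"
    then have b: "\<forall>x. \<bar>g x - rescale (c \<eta>) g x\<bar> \<le> z" using d(2) by (simp add: dist_real_def)
    have "supnorm (\<lambda>x. g x - rescale (c \<eta>) g x) \<le> ereal z"
      unfolding supnorm_def by (rule SUP_least) (use b in simp)
    then show "supnorm (\<lambda>x. g x - rescale (c \<eta>) g x) < y" using z by simp
  qed
qed


theorem proposition3p26:
  fixes a \<alpha> :: real and f :: "real \<Rightarrow> real"
  assumes "a > 0" and "0 \<le> \<alpha>" and "\<alpha> < 1" and "f \<in> class_C a"
  defines "g \<equiv> Sh a \<alpha> f"
  shows "((\<lambda>\<eta>. supnorm (\<lambda>x. g x - rescale (1 + \<eta> / 2) g x)) \<longlongrightarrow> 0) (at_right 0)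
       \<and> ((\<lambda>\<eta>. supnorm (\<lambda>x. g x - rescale (1 - \<eta> / 2) g x)) \<longlongrightarrow> 0) (at_right 0)"
proof -
  interpret shc a \<alpha> f using assms(1-4) by unfold_locales
  define M where "M = max a (\<bar>shc.s a \<alpha> f\<bar> + 1)"
  have M: "M > 0" using assms(1) M_def by auto
  have cont: "continuous_on UNIV g" using g_cont g_def by simp
  have ab: "\<And>x. \<bar>x\<bar> \<ge> M \<Longrightarrow> g x = \<bar>x\<bar>" using g_abs g_def M_def by simp
  have c1: "((\<lambda>\<eta>::real. 1 + \<eta> / 2) \<longlongrightarrow> 1) (at_right 0)"
    by (rule tendsto_eq_intros | simp)+
  have c2: "((\<lambda>\<eta>::real. 1 - \<eta> / 2) \<longlongrightarrow> 1) (at_right 0)"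
    by (rule tendsto_eq_intros | simp)+
  show ?thesis using lim_generic[OF cont M ab c1] lim_generic[OF cont M ab c2] by simp
qed

end
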